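(* Let $(P,(J_c)_{c\in\mathcal C})$ be an existential doctrinal site and $J_\rtimes$ its existential topology on $\mathcal C\rtimes P$. Then the geometric completion $\mathfrak I(P,J_\rtimes)$ is isomorphic to the point-wise ideal completion of $P$: namely, to the doctrine sending $c\in\mathcal C$ to the frame $J_c\text{-}\mathrm{Idl}(P(c))$ and sending $f:d\to c$ to the map $J_c\text{-}\mathrm{Idl}(P(c))\to J_d\text{-}\mathrm{Idl}(P(d))$, $I\mapsto\{y\in P(d):\exists_f y\in I\}$.
   Context: For a doctrine $P:\mathcal C^{op}\to\mathbf{PreOrd}$, $\mathcal C\rtimes P$ has objects $(c,x)$, $x\in P(c)$, and morphisms $f:(c,x)\to(d,y)$ the $f:c\to d$ in $\mathcal C$ with $x\le P(f)(y)$. Existential doctrinal site: a doctrine $P$ such that for each $f:d\to c$ in $\mathcal C$, $P(f):P(c)\to P(d)$ has a left adjoint $\exists_f:P(d)\to P(c)$, together with a Grothendieck topology $J_c$ on each preorder $P(c)$ (viewed as a category) such that each $\exists_f$ sends $J_d$-covering sieves to $J_c$-covering families, satisfying: (relative Frobenius) for each sieve $S$ on $(d,y)$ in $\mathcal C\rtimes P$ such that $\{\exists_f z\le y: (f:(c,z)\to(d,y))\in S\}$ generates a $J_d$-covering sieve on $y$, and each $x\le y$ in $P(d)$, the family $\{\exists_f z\le x: (f:(c,z)\to(d,y))\in S,\ z\le P(f)(x)\}$ generates a $J_d$-covering sieve on $x$; (relative Beck–Chevalley) for each such $S$ and each $h:e\to d$ in $\mathcal C$, the family $\{\exists_gz\le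 P(h)(y): g:(c,z)\to(e,P(h)(y))\text{ in }\mathcal C\rtimes P,\ h\circ g\in S\}$ generates a $J_e$-covering sieve on $P(h)(y)$. The existential topology $J_\rtimes$ on $\mathcal C\rtimes P$: a sieve $\{f_i:(c_i,x_i)\to(d,y)\}_i$ is $J_\rtimes$-covering iff $\{\exists_{f_i}x_i\le y\}_i$ generates a $J_d$-covering sieve on $y$. For a preorder $Q$ with Grothendieck topology $K$, $K\text{-}\mathrm{Idl}(Q)$ is the frame, ordered by inclusion, of down-sets $I\subseteq Q$ that are $K$-closed: if $\{y_j\le x\}$ generates a $K$-covering sieve on $x$ and all $y_j\in I$ then $x\in I$. Geometric completion $\mathfrak I(P,J)$ for a topology $J$ on $\mathcal C\rtimes P$: $\mathfrak I(P,J)(c)$ is the inclusion-ordered set of sets $S$ of pairs $(f,x)$, $f:d\to c$, $x\in P(d)$ such that (a) $(f,x)\in S$, $g:e\to d$, $y\le P(g)(x)$ imply $(f\circ g,y)\in S$; (b) if $\{h_i:(e_i,y_i)\to(d,x)\}$ is $J$-covering and all $(f\circ h_i,y_i)\in S$ then $(f,x)\in S$; with $\mathfrak I(P,J)(f)(S)=\{(g,y):(f\circ g,y)\in S\}$. *)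

theory Defs
  imports Main
begin

record ('o,'m) cat =
  obj   :: "'o set"
  arr   :: "'m set"
  cdom  :: "'m \<Rightarrow> 'o"
  ccod  :: "'m \<Rightarrow> 'o"
  ccomp :: "'m \<Rightarrow> 'm \<Rightarrow> 'm"   (* ccomp g f = g \<circ> f, f first *)
  cid   :: "'o \<Rightarrow> 'm"

definition is_category :: "('o,'m) cat \<Rightarrow> bool" where
  "is_category C \<longleftrightarrow>
     (\<forall>f\<in>arr C. cdom C f \<in> obj C \<and> ccod C f \<in> obj C) \<and>
     (\<forall>c\<in>obj C. cid C c \<in> arr C \<and> cdom C (cid C c) = c \<and> ccod C (cid C c) = c) \<and>
     (\<forall>f\<in>arr C. \<forall>g\<in>arr C. ccod C f = cdom C g \<longrightarrow>
        ccomp C g f \<in> arr C \<and> cdom C (ccomp C g f) = cdom C f \<and> ccod C (ccomp C g f) = ccod C g) \<and>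
     (\<forall>f\<in>arr C. ccomp C f (cid C (cdom C f)) = f \<and> ccomp C (cid C (ccod C f)) f = f) \<and>
     (\<forall>f\<in>arr C. \<forall>g\<in>arr C. \<forall>h\<in>arr C. ccod C f = cdom C g \<longrightarrow> ccod C g = cdom C h \<longrightarrow>
        ccomp C h (ccomp C g f) = ccomp C (ccomp C h g) f)"

record ('o,'m,'x) doctrine =
  carr  :: "'o \<Rightarrow> 'x set"
  leq   :: "'o \<Rightarrow> 'x \<Rightarrow> 'x \<Rightarrow> bool"
  reidx :: "'m \<Rightarrow> 'x \<Rightarrow> 'x"             (* P(f) : P(cod f) \<rightarrow> P(dom f) *)

definition is_doctrine :: "('o,'m) cat \<Rightarrow> ('o,'m,'x) doctrine \<Rightarrow> bool" where
  "is_doctrine C P \<longleftrightarrow>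
     (\<forall>c\<in>obj C. (\<forall>x\<in>carr P c. leq P c x x) \<and>
        (\<forall>x\<in>carr P c. \<forall>y\<in>carr P c. \<forall>z\<in>carr P c. leq P c x y \<longrightarrow> leq P c y z \<longrightarrow> leq P c x z)) \<and>
     (\<forall>f\<in>arr C. \<forall>x\<in>carr P (ccod C f). reidx P f x \<in> carr P (cdom C f)) \<and>
     (\<forall>f\<in>arr C. \<forall>x\<in>carr P (ccod C f). \<forall>y\<in>carr P (ccod C f).
        leq P (ccod C f) x y \<longrightarrow> leq P (cdom C f) (reidx P f x) (reidx P f y)) \<and>
     (\<forall>c\<in>obj C. \<forall>x\<in>carr P c. reidx P (cid C c) x = x) \<and>
     (\<forall>f\<in>arr C. \<forall>g\<in>arr C. ccod C f = cdom C g \<longrightarrow>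
        (\<forall>x\<in>carr P (ccod C g). reidx P (ccomp C g f) x = reidx P f (reidx P g x)))"

text \<open>K x S means: S is a K-covering sieve on x.\<close>

definition down_set :: "'x set \<Rightarrow> ('x \<Rightarrow> 'x \<Rightarrow> bool) \<Rightarrow> 'x \<Rightarrow> 'x set" where
  "down_set Q le x = {y\<in>Q. le y x}"

definition is_sieve_po :: "'x set \<Rightarrow> ('x \<Rightarrow> 'x \<Rightarrow> bool) \<Rightarrow> 'x \<Rightarrow> 'x set \<Rightarrow> bool" where
  "is_sieve_po Q le x S \<longleftrightarrow> S \<subseteq> down_set Q le x \<and> (\<forall>y\<in>S. \<forall>z\<in>Q. le z y \<longrightarrow> z \<in> S)"

definition gen_sieve :: "'x set \<Rightarrow> ('x \<Rightarrow> 'x \<Rightarrow> bool) \<Rightarrow> 'x set \<Rightarrow> 'x set" where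
  "gen_sieve Q le F = {z\<in>Q. \<exists>w\<in>F. le z w}"

definition is_groth_top_po :: "'x set \<Rightarrow> ('x \<Rightarrow> 'x \<Rightarrow> bool) \<Rightarrow> ('x \<Rightarrow> 'x set \<Rightarrow> bool) \<Rightarrow> bool" where
  "is_groth_top_po Q le K \<longleftrightarrow>
     (\<forall>x S. K x S \<longrightarrow> x \<in> Q \<and> is_sieve_po Q le x S) \<and>
     (\<forall>x\<in>Q. K x (down_set Q le x)) \<and>
     (\<forall>x S y. K x S \<longrightarrow> y \<in> Q \<longrightarrow> le y x \<longrightarrow> K y {z\<in>S. le z y}) \<and>
     (\<forall>x S R. K x S \<longrightarrow> is_sieve_po Q le x R \<longrightarrow> (\<forall>y\<in>S. K y {z\<in>R. le z y}) \<longrightarrow> K x R)"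

definition K_Idl :: "'x set \<Rightarrow> ('x \<Rightarrow> 'x \<Rightarrow> bool) \<Rightarrow> ('x \<Rightarrow> 'x set \<Rightarrow> bool) \<Rightarrow> 'x set set" where
  "K_Idl Q le K = {I. I \<subseteq> Q \<and> (\<forall>y\<in>I. \<forall>z\<in>Q. le z y \<longrightarrow> z \<in> I) \<and>
      (\<forall>x\<in>Q. \<forall>F. F \<subseteq> down_set Q le x \<longrightarrow> K x (gen_sieve Q le F) \<longrightarrow> F \<subseteq> I \<longrightarrow> x \<in> I)}"

definition has_left_adjoints :: "('o,'m) cat \<Rightarrow> ('o,'m,'x) doctrine \<Rightarrow> ('m \<Rightarrow> 'x \<Rightarrow> 'x) \<Rightarrow> bool" where
  "has_left_adjoints C P ex \<longleftrightarrow>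
     (\<forall>f\<in>arr C. \<forall>y\<in>carr P (cdom C f). ex f y \<in> carr P (ccod C f) \<and>
        (\<forall>x\<in>carr P (ccod C f). leq P (ccod C f) (ex f y) x \<longleftrightarrow> leq P (cdom C f) y (reidx P f x)))"

text \<open>Objects of C \<rtimes> P are pairs (c,x); a morphism into (d,y) with source (c,z) is
  represented by the pair (f,z), f : c \<rightarrow> d, with z \<le> P(f)(y).\<close>
definition arrows_into :: "('o,'m) cat \<Rightarrow> ('o,'m,'x) doctrine \<Rightarrow> 'o \<Rightarrow> 'x \<Rightarrow> ('m \<times> 'x) set" where
  "arrows_into C P d y = {(f,z). f \<in> arr C \<and> ccod C f = d \<and> z \<in> carr P (cdom C f) \<and>
                                   leq P (cdom C f) z (reidx P f y)}"

definition is_sieve_rtimes :: "('o,'m) cat \<Rightarrow> ('o,'m,'x) doctrine \<Rightarrow> 'o \<Rightarrow> 'x \<Rightarrow> ('m \<times> 'x) set \<Rightarrow> bool" where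
  "is_sieve_rtimes C P d y S \<longleftrightarrow> S \<subseteq> arrows_into C P d y \<and>
     (\<forall>(f,z)\<in>S. \<forall>g\<in>arr C. \<forall>w. ccod C g = cdom C f \<longrightarrow> w \<in> carr P (cdom C g) \<longrightarrow>
        leq P (cdom C g) w (reidx P g z) \<longrightarrow> (ccomp C f g, w) \<in> S)"

text \<open>The existential topology: a family of arrows into (d,y) is J\<rtimes>-covering iff
  the family of the \<exists>_f z generates a J_d-covering sieve on y.\<close>
definition exi_cov :: "('o,'m) cat \<Rightarrow> ('o,'m,'x) doctrine \<Rightarrow> ('m \<Rightarrow> 'x \<Rightarrow> 'x) \<Rightarrow>
    ('o \<Rightarrow> 'x \<Rightarrow> 'x set \<Rightarrow> bool) \<Rightarrow> 'o \<Rightarrow> 'x \<Rightarrow> ('m \<times> 'x) set \<Rightarrow> bool" where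
  "exi_cov C P ex J d y S \<longleftrightarrow>
     J d y (gen_sieve (carr P d) (leq P d) {ex f z | f z. (f,z) \<in> S})"

definition existential_doctrinal_site :: "('o,'m) cat \<Rightarrow> ('o,'m,'x) doctrine \<Rightarrow>
    ('m \<Rightarrow> 'x \<Rightarrow> 'x) \<Rightarrow> ('o \<Rightarrow> 'x \<Rightarrow> 'x set \<Rightarrow> bool) \<Rightarrow> bool" where
  "existential_doctrinal_site C P ex J \<longleftrightarrow>
     is_category C \<and> is_doctrine C P \<and> has_left_adjoints C P ex \<and>
     (\<forall>c\<in>obj C. is_groth_top_po (carr P c) (leq P c) (J c)) \<and>
     \<comment> \<open>\<exists>_f sends J_d-covering sieves to J_c-covering families\<close>
     (\<forall>f\<in>arr C. \<forall>y S. J (cdom C f) y S \<longrightarrow>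
        J (ccod C f) (ex f y) (gen_sieve (carr P (ccod C f)) (leq P (ccod C f)) (ex f ` S))) \<and>
     \<comment> \<open>relative Frobenius\<close>
     (\<forall>d\<in>obj C. \<forall>y\<in>carr P d. \<forall>S. is_sieve_rtimes C P d y S \<longrightarrow> exi_cov C P ex J d y S \<longrightarrow>
        (\<forall>x\<in>carr P d. leq P d x y \<longrightarrow>
           J d x (gen_sieve (carr P d) (leq P d)
                    {ex f z | f z. (f,z) \<in> S \<and> leq P (cdom C f) z (reidx P f x)}))) \<and>
     \<comment> \<open>relative Beck--Chevalley\<close>
     (\<forall>d\<in>obj C. \<forall>y\<in>carr P d. \<forall>S. is_sieve_rtimes C P d y S \<longrightarrow> exi_cov C P ex J d y S \<longrightarrow>
        (\<forall>h\<in>arr C. ccod C h = d \<longrightarrow>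
           J (cdom C h) (reidx P h y) (gen_sieve (carr P (cdom C h)) (leq P (cdom C h))
              {ex g z | g z. (g,z) \<in> arrows_into C P (cdom C h) (reidx P h y) \<and>
                             (ccomp C h g, z) \<in> S})))"

definition geom_compl :: "('o,'m) cat \<Rightarrow> ('o,'m,'x) doctrine \<Rightarrow> ('m \<Rightarrow> 'x \<Rightarrow> 'x) \<Rightarrow>
    ('o \<Rightarrow> 'x \<Rightarrow> 'x set \<Rightarrow> bool) \<Rightarrow> 'o \<Rightarrow> ('m \<times> 'x) set set" where
  "geom_compl C P ex J c = {S.
     S \<subseteq> {(f,x). f \<in> arr C \<and> ccod C f = c \<and> x \<in> carr P (cdom C f)} \<and>
     (\<forall>(f,x)\<in>S. \<forall>g\<in>arr C. \<forall>y. ccod C g = cdom C f \<longrightarrow> y \<in> carr P (cdom C g) \<longrightarrow>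
        leq P (cdom C g) y (reidx P g x) \<longrightarrow> (ccomp C f g, y) \<in> S) \<and>
     (\<forall>f\<in>arr C. \<forall>x\<in>carr P (cdom C f). ccod C f = c \<longrightarrow>
        (\<forall>H. H \<subseteq> arrows_into C P (cdom C f) x \<longrightarrow> exi_cov C P ex J (cdom C f) x H \<longrightarrow>
           (\<forall>(h,y)\<in>H. (ccomp C f h, y) \<in> S) \<longrightarrow> (f,x) \<in> S))}"

definition geom_compl_map :: "('o,'m) cat \<Rightarrow> ('o,'m,'x) doctrine \<Rightarrow> 'm \<Rightarrow>
    ('m \<times> 'x) set \<Rightarrow> ('m \<times> 'x) set" where
  "geom_compl_map C P f S = {(g,y). g \<in> arr C \<and> ccod C g = cdom C f \<and> y \<in> carr P (cdom C g) \<and>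
                                   (ccomp C f g, y) \<in> S}"

definition ideal_compl :: "('o,'m,'x) doctrine \<Rightarrow> ('o \<Rightarrow> 'x \<Rightarrow> 'x set \<Rightarrow> bool) \<Rightarrow> 'o \<Rightarrow> 'x set set" where
  "ideal_compl P J c = K_Idl (carr P c) (leq P c) (J c)"

definition ideal_compl_map :: "('o,'m) cat \<Rightarrow> ('o,'m,'x) doctrine \<Rightarrow> ('m \<Rightarrow> 'x \<Rightarrow> 'x) \<Rightarrow>
    'm \<Rightarrow> 'x set \<Rightarrow> 'x set" where
  "ideal_compl_map C P ex f I = {y \<in> carr P (cdom C f). ex f y \<in> I}"

end

theory Submission
  imports Defs
begin

context
  fixes C :: "('o,'m) cat" and P :: "('o,'m,'x) doctrine"
    and ex :: "'m \<Rightarrow> 'x \<Rightarrow> 'x" and J :: "'o \<Rightarrow> 'x \<Rightarrow> 'x set \<Rightarrow> bool"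
  assumes EDS: "existential_doctrinal_site C P ex J"
begin

lemma cat: "is_category C" using EDS unfolding existential_doctrinal_site_def by blast
lemma doc: "is_doctrine C P" using EDS unfolding existential_doctrinal_site_def by blast
lemma adj: "has_left_adjoints C P ex" using EDS unfolding existential_doctrinal_site_def by blast

lemma cid: "c \<in> obj C \<Longrightarrow> cid C c \<in> arr C \<and> cdom C (cid C c) = c \<and> ccod C (cid C c) = c"
  using cat unfolding is_category_def by blast
lemma domcod: "f \<in> arr C \<Longrightarrow> cdom C f \<in> obj C \<and> ccod C f \<in> obj C"
  using cat unfolding is_category_def by blast
lemma comp: "f \<in> arr C \<Longrightarrow> g \<in> arr C \<Longrightarrow> ccod C f = cdom C g \<Longrightarrow>
        ccomp C g f \<in> arr C \<and> cdom C (ccomp C g f) = cdom C f \<and> ccod C (ccomp C g f) = ccod C g"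
  using cat unfolding is_category_def by blast
lemma idl: "f \<in> arr C \<Longrightarrow> ccomp C (cid C (ccod C f)) f = f"
  using cat unfolding is_category_def by blast
lemma idr: "f \<in> arr C \<Longrightarrow> ccomp C f (cid C (cdom C f)) = f"
  using cat unfolding is_category_def by blast

lemma refl: "c \<in> obj C \<Longrightarrow> x \<in> carr P c \<Longrightarrow> leq P c x x"
  using doc unfolding is_doctrine_def by blast
lemma trans: "c \<in> obj C \<Longrightarrow> x \<in> carr P c \<Longrightarrow> y \<in> carr P c \<Longrightarrow> z \<in> carr P c \<Longrightarrow>
   leq P c x y \<Longrightarrow> leq P c y z \<Longrightarrow> leq P c x z"
  using doc unfolding is_doctrine_def by blast
lemma rcarr: "f \<in> arr C \<Longrightarrow> x \<in> carr P (ccod C f) \<Longrightarrow> reidx P f x \<in> carr P (cdom C f)"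
  using doc unfolding is_doctrine_def by blast
lemma rmono: "f \<in> arr C \<Longrightarrow> x \<in> carr P (ccod C f) \<Longrightarrow> y \<in> carr P (ccod C f) \<Longrightarrow>
   leq P (ccod C f) x y \<Longrightarrow> leq P (cdom C f) (reidx P f x) (reidx P f y)"
  using doc unfolding is_doctrine_def by blast
lemma rid: "c \<in> obj C \<Longrightarrow> x \<in> carr P c \<Longrightarrow> reidx P (cid C c) x = x"
  using doc unfolding is_doctrine_def by blast
lemma rcomp: "f \<in> arr C \<Longrightarrow> g \<in> arr C \<Longrightarrow> ccod C f = cdom C g \<Longrightarrow> x \<in> carr P (ccod C g) \<Longrightarrow>
   reidx P (ccomp C g f) x = reidx P f (reidx P g x)"
  using doc unfolding is_doctrine_def by blast

lemma excarr: "f \<in> arr C \<Longrightarrow> y \<in> carr P (cdom C f) \<Longrightarrow> ex f y \<in> carr P (ccod C f)"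
  using adj unfolding has_left_adjoints_def by blast
lemma exadj: "f \<in> arr C \<Longrightarrow> y \<in> carr P (cdom C f) \<Longrightarrow> x \<in> carr P (ccod C f) \<Longrightarrow>
   leq P (ccod C f) (ex f y) x \<longleftrightarrow> leq P (cdom C f) y (reidx P f x)"
  using adj unfolding has_left_adjoints_def by blast

lemma top: "c \<in> obj C \<Longrightarrow> is_groth_top_po (carr P c) (leq P c) (J c)"
  using EDS unfolding existential_doctrinal_site_def by blast
lemma exJ: "f \<in> arr C \<Longrightarrow> J (cdom C f) y S \<Longrightarrow>
        J (ccod C f) (ex f y) (gen_sieve (carr P (ccod C f)) (leq P (ccod C f)) (ex f ` S))"
proof -
  have "\<forall>f\<in>arr C. \<forall>y S. J (cdom C f) y S \<longrightarrow>
        J (ccod C f) (ex f y) (gen_sieve (carr P (ccod C f)) (leq P (ccod C f)) (ex f ` S))"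
    using EDS unfolding existential_doctrinal_site_def by (elim conjE) assumption
  thus "f \<in> arr C \<Longrightarrow> J (cdom C f) y S \<Longrightarrow> J (ccod C f) (ex f y) (gen_sieve (carr P (ccod C f)) (leq P (ccod C f)) (ex f ` S))"
    by blast
qed

lemma Jsieve: "c \<in> obj C \<Longrightarrow> J c x S \<Longrightarrow> x \<in> carr P c \<and> S \<subseteq> down_set (carr P c) (leq P c) x"
proof -
  assume c: "c \<in> obj C" and j: "J c x S"
  have "\<forall>x S. J c x S \<longrightarrow> x \<in> carr P c \<and> is_sieve_po (carr P c) (leq P c) x S"
    using top[OF c] unfolding is_groth_top_po_def by (elim conjE) assumption
  thus ?thesis using j unfolding is_sieve_po_def by blast
qed
lemma Jtop: "c \<in> obj C \<Longrightarrow> x \<in> carr P c \<Longrightarrow> J c x (down_set (carr P c) (leq P c) x)"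
proof -
  assume c: "c \<in> obj C" and x: "x \<in> carr P c"
  have "\<forall>x\<in>carr P c. J c x (down_set (carr P c) (leq P c) x)"
    using top[OF c] unfolding is_groth_top_po_def by (elim conjE) assumption
  thus ?thesis using x by blast
qed

lemma unit: "f \<in> arr C \<Longrightarrow> x \<in> carr P (cdom C f) \<Longrightarrow> leq P (cdom C f) x (reidx P f (ex f x))"
  using exadj[of f x "ex f x"] excarr refl domcod by blast

lemma exmono: "f \<in> arr C \<Longrightarrow> x \<in> carr P (cdom C f) \<Longrightarrow> y \<in> carr P (cdom C f) \<Longrightarrow>
   leq P (cdom C f) x y \<Longrightarrow> leq P (ccod C f) (ex f x) (ex f y)"
  by (meson domcod excarr exadj rcarr trans unit)

lemma exid1: "c \<in> obj C \<Longrightarrow> x \<in> carr P c \<Longrightarrow> leq P c (ex (cid C c) x) x"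
  using exadj[of "cid C c" x x] cid rid refl by metis
lemma exid2: "c \<in> obj C \<Longrightarrow> x \<in> carr P c \<Longrightarrow> leq P c x (ex (cid C c) x)"
  using unit[of "cid C c" x] cid rid excarr by metis

lemma excomp: "f \<in> arr C \<Longrightarrow> h \<in> arr C \<Longrightarrow> ccod C h = cdom C f \<Longrightarrow> y \<in> carr P (cdom C h) \<Longrightarrow>
   leq P (ccod C f) (ex f (ex h y)) (ex (ccomp C f h) y)"
proof -
  assume a: "f \<in> arr C" "h \<in> arr C" "ccod C h = cdom C f" "y \<in> carr P (cdom C h)"
  note fh = comp[OF a(2,1,3)]
  let ?w = "ex (ccomp C f h) y"
  have w: "?w \<in> carr P (ccod C f)" using excarr[of "ccomp C f h" y] fh a by simp
  have "leq P (cdom C h) y (reidx P (ccomp C f h) ?w)" using unit[of "ccomp C f h" y] fh a by simp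
  hence "leq P (cdom C h) y (reidx P h (reidx P f ?w))" using rcomp[OF a(2,1,3)] w by simp
  hence "leq P (ccod C h) (ex h y) (reidx P f ?w)" using exadj[of h y "reidx P f ?w"] a rcarr w by simp
  thus ?thesis using exadj[of f "ex h y" ?w] a w excarr[of h y] by simp
qed

lemma gcD:
  assumes "S \<in> geom_compl C P ex J c"
  shows "S \<subseteq> {(f,x). f \<in> arr C \<and> ccod C f = c \<and> x \<in> carr P (cdom C f)}"
    and "(f,x)\<in>S \<Longrightarrow> g\<in>arr C \<Longrightarrow> ccod C g = cdom C f \<Longrightarrow> y \<in> carr P (cdom C g) \<Longrightarrow>
        leq P (cdom C g) y (reidx P g x) \<Longrightarrow> (ccomp C f g, y) \<in> S"
    and "f\<in>arr C \<Longrightarrow> x\<in>carr P (cdom C f) \<Longrightarrow> ccod C f = c \<Longrightarrow>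
         H \<subseteq> arrows_into C P (cdom C f) x \<Longrightarrow> exi_cov C P ex J (cdom C f) x H \<Longrightarrow>
           (\<forall>(h,y)\<in>H. (ccomp C f h, y) \<in> S) \<Longrightarrow> (f,x) \<in> S"
proof -
  have A: "S \<subseteq> {(f,x). f \<in> arr C \<and> ccod C f = c \<and> x \<in> carr P (cdom C f)} \<and>
     (\<forall>(f,x)\<in>S. \<forall>g\<in>arr C. \<forall>y. ccod C g = cdom C f \<longrightarrow> y \<in> carr P (cdom C g) \<longrightarrow>
        leq P (cdom C g) y (reidx P g x) \<longrightarrow> (ccomp C f g, y) \<in> S) \<and>
     (\<forall>f\<in>arr C. \<forall>x\<in>carr P (cdom C f). ccod C f = c \<longrightarrow>
        (\<forall>H. H \<subseteq> arrows_into C P (cdom C f) x \<longrightarrow> exi_cov C P ex J (cdom C f) x H \<longrightarrow>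
           (\<forall>(h,y)\<in>H. (ccomp C f h, y) \<in> S) \<longrightarrow> (f,x) \<in> S))"
    using assms unfolding geom_compl_def by (rule CollectD)
  show "S \<subseteq> {(f,x). f \<in> arr C \<and> ccod C f = c \<and> x \<in> carr P (cdom C f)}" using A by (rule conjunct1)
  { assume "(f,x)\<in>S" "g\<in>arr C" "ccod C g = cdom C f" "y \<in> carr P (cdom C g)"
        "leq P (cdom C g) y (reidx P g x)"
    thus "(ccomp C f g, y) \<in> S" using A[THEN conjunct2, THEN conjunct1] by fast }
  { assume "f\<in>arr C" "x\<in>carr P (cdom C f)" "ccod C f = c"
         "H \<subseteq> arrows_into C P (cdom C f) x" "exi_cov C P ex J (cdom C f) x H"
           "\<forall>(h,y)\<in>H. (ccomp C f h, y) \<in> S"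
    thus "(f,x) \<in> S" using A[THEN conjunct2, THEN conjunct2] by blast }
qed

lemma Siff:
  assumes S: "S \<in> geom_compl C P ex J c" and f: "f \<in> arr C" "ccod C f = c" and x: "x \<in> carr P (cdom C f)"
  shows "(f,x) \<in> S \<longleftrightarrow> (cid C c, ex f x) \<in> S"
proof -
  have c: "c \<in> obj C" using domcod f by blast
  note ci = cid[OF c]
  have e: "ex f x \<in> carr P c" using excarr f x by blast
  have u: "leq P (cdom C f) x (reidx P f (ex f x))" using unit f x by blast
  show ?thesis
  proof
    assume a: "(cid C c, ex f x) \<in> S"
    have "(ccomp C (cid C c) f, x) \<in> S"
      using gcD(2)[OF S a f(1) _ x] ci f u by simp
    thus "(f,x) \<in> S" using idl[OF f(1)] unfolding f(2) by simp
  next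
    assume a: "(f,x) \<in> S"
    have H: "{(f,x)} \<subseteq> arrows_into C P (cdom C (cid C c)) (ex f x)"
      unfolding arrows_into_def using ci f x u by simp
    have g: "gen_sieve (carr P c) (leq P c) {ex g z | g z. (g,z) \<in> {(f,x)}} = down_set (carr P c) (leq P c) (ex f x)"
      unfolding gen_sieve_def down_set_def by auto
    have "exi_cov C P ex J (cdom C (cid C c)) (ex f x) {(f,x)}"
      unfolding exi_cov_def using ci g Jtop[OF c e] by simp
    moreover have "\<forall>(h,y)\<in>{(f,x)}. (ccomp C (cid C c) h, y) \<in> S" using idl[OF f(1)] a unfolding f(2) by simp
    ultimately show "(cid C c, ex f x) \<in> S"
      using gcD(3)[OF S ci[THEN conjunct1] _ _ H] ci e by simp
  qed
qed

lemma KD: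
  assumes "I \<in> ideal_compl P J c"
  shows "I \<subseteq> carr P c" and "y\<in>I \<Longrightarrow> z\<in>carr P c \<Longrightarrow> leq P c z y \<Longrightarrow> z \<in> I"
    and "x\<in>carr P c \<Longrightarrow> F \<subseteq> down_set (carr P c) (leq P c) x \<Longrightarrow>
         J c x (gen_sieve (carr P c) (leq P c) F) \<Longrightarrow> F \<subseteq> I \<Longrightarrow> x \<in> I"
  using assms unfolding ideal_compl_def K_Idl_def by blast+

lemma phi_ideal:
  assumes S: "S \<in> geom_compl C P ex J c" and c: "c \<in> obj C"
  shows "{x\<in>carr P c. (cid C c, x) \<in> S} \<in> ideal_compl P J c"
proof -
  note ci = cid[OF c]
  have down: "z \<in> carr P c \<Longrightarrow> leq P c z y \<Longrightarrow> (cid C c, y) \<in> S \<Longrightarrow> y \<in> carr P c \<Longrightarrow> (cid C c, z) \<in> S" for y z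
  proof -
    assume a: "z \<in> carr P c" "leq P c z y" "(cid C c, y) \<in> S" "y \<in> carr P c"
    have "(ccomp C (cid C c) (cid C c), z) \<in> S"
      using gcD(2)[OF S a(3) ci[THEN conjunct1]] ci a rid[OF c a(4)] by simp
    thus ?thesis using idl[of "cid C c"] ci by simp
  qed
  have clos: "(cid C c, x) \<in> S" if x: "x\<in>carr P c" and F: "F \<subseteq> down_set (carr P c) (leq P c) x"
      and JF: "J c x (gen_sieve (carr P c) (leq P c) F)" and FS: "\<forall>z\<in>F. (cid C c, z) \<in> S" for x F
  proof -
    let ?H = "{(cid C c, z) | z. z \<in> F}"
    have H: "?H \<subseteq> arrows_into C P (cdom C (cid C c)) x"
      using F ci rid[OF c x] unfolding arrows_into_def down_set_def by auto
    have eq: "gen_sieve (carr P c) (leq P c) {ex g z | g z. (g,z) \<in> ?H} = gen_sieve (carr P c) (leq P c) F"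
    proof -
      have Fc: "F \<subseteq> carr P c" using F unfolding down_set_def by auto
      have e: "w \<in> F \<Longrightarrow> ex (cid C c) w \<in> carr P c" for w using excarr[of "cid C c" w] ci Fc by auto
      show ?thesis unfolding gen_sieve_def
        apply (rule set_eqI; rule iffI)
        using exid1[OF c] e Fc trans[OF c] apply blast
        using exid2[OF c] e Fc trans[OF c] by blast
    qed
    have "exi_cov C P ex J (cdom C (cid C c)) x ?H" unfolding exi_cov_def using ci eq JF by simp
    moreover have "\<forall>(h,y)\<in>?H. (ccomp C (cid C c) h, y) \<in> S" using FS idl[of "cid C c"] ci by auto
    ultimately show ?thesis using gcD(3)[OF S ci[THEN conjunct1] _ _ H] ci x by simp
  qed
  show ?thesis unfolding ideal_compl_def K_Idl_def
    using down clos by (auto simp: subset_iff)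
qed

lemma psi_gc:
  assumes I: "I \<in> ideal_compl P J c" and c: "c \<in> obj C"
  shows "{(f,x). f\<in>arr C \<and> ccod C f = c \<and> x \<in> carr P (cdom C f) \<and> ex f x \<in> I} \<in> geom_compl C P ex J c"
    (is "?S \<in> _")
proof -
  have A: "(ccomp C f g, y) \<in> ?S" if a: "(f,x)\<in>?S" "g\<in>arr C" "ccod C g = cdom C f" "y \<in> carr P (cdom C g)"
        "leq P (cdom C g) y (reidx P g x)" for f x g y
  proof -
    have f: "f \<in> arr C" "ccod C f = c" "x \<in> carr P (cdom C f)" "ex f x \<in> I" using a(1) by auto
    note fg = comp[OF a(2) f(1) a(3)]
    have e: "ex f x \<in> carr P (ccod C f)" using excarr f by blast
    have "leq P (cdom C g) (reidx P g x) (reidx P g (reidx P f (ex f x)))"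
      using rmono[of g x "reidx P f (ex f x)"] a(2,3) f rcarr e unit by simp
    hence "leq P (cdom C g) y (reidx P (ccomp C f g) (ex f x))"
      using trans[of "cdom C g" y "reidx P g x" "reidx P g (reidx P f (ex f x))"] a domcod rcarr e f
        rcomp[OF a(2) f(1) a(3)] by simp
    hence "leq P c (ex (ccomp C f g) y) (ex f x)"
      using exadj[of "ccomp C f g" y "ex f x"] fg a(4) e f(2) by simp
    moreover have "ex (ccomp C f g) y \<in> carr P c" using excarr[of "ccomp C f g" y] fg a(4) f(2) by simp
    ultimately have "ex (ccomp C f g) y \<in> I" using KD(2)[OF I f(4)] by blast
    thus ?thesis using fg f(2) a(4) by simp
  qed
  have B: "(f,x) \<in> ?S" if a: "f\<in>arr C" "x\<in>carr P (cdom C f)" "ccod C f = c"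
         "H \<subseteq> arrows_into C P (cdom C f) x" "exi_cov C P ex J (cdom C f) x H"
           "\<forall>(h,y)\<in>H. (ccomp C f h, y) \<in> ?S" for f x H
  proof -
    let ?d = "cdom C f"
    have d: "?d \<in> obj C" using domcod a by blast
    let ?G = "gen_sieve (carr P ?d) (leq P ?d) {ex h y | h y. (h,y) \<in> H}"
    have JG: "J ?d x ?G" using a(5) unfolding exi_cov_def .
    have Gd: "?G \<subseteq> down_set (carr P ?d) (leq P ?d) x" using Jsieve[OF d JG] by blast
    have J2: "J c (ex f x) (gen_sieve (carr P c) (leq P c) (ex f ` ?G))" using exJ[OF a(1) JG] a(3) by simp
    have efx: "ex f x \<in> carr P c" using excarr a by blast
    have F1: "ex f ` ?G \<subseteq> down_set (carr P c) (leq P c) (ex f x)"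
    proof
      fix w assume "w \<in> ex f ` ?G"
      then obtain z where z: "z \<in> ?G" "w = ex f z" by blast
      have "z \<in> carr P ?d" "leq P ?d z x" using Gd z unfolding down_set_def by auto
      thus "w \<in> down_set (carr P c) (leq P c) (ex f x)"
        using exmono[OF a(1) _ a(2)] excarr[OF a(1)] z a(3) unfolding down_set_def by auto
    qed
    have F2: "ex f ` ?G \<subseteq> I"
    proof
      fix w assume "w \<in> ex f ` ?G"
      then obtain z where z: "z \<in> ?G" "w = ex f z" by blast
      obtain h y where hy: "(h,y) \<in> H" "z \<in> carr P ?d" "leq P ?d z (ex h y)"
        using z(1) unfolding gen_sieve_def by blast
      have h: "h \<in> arr C" "ccod C h = ?d" "y \<in> carr P (cdom C h)"
        using a(4) hy(1) unfolding arrows_into_def by auto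
      have hS: "ex (ccomp C f h) y \<in> I" using a(6) hy(1) by auto
      note fh = comp[OF h(1) a(1) h(2)]
      have ehy: "ex h y \<in> carr P ?d" using excarr h by metis
      have "leq P c (ex f z) (ex f (ex h y))" using exmono[OF a(1) hy(2) ehy hy(3)] a(3) by simp
      moreover have "leq P c (ex f (ex h y)) (ex (ccomp C f h) y)" using excomp[OF a(1) h] a(3) by simp
      moreover have "ex f z \<in> carr P c" "ex f (ex h y) \<in> carr P c" "ex (ccomp C f h) y \<in> carr P c"
        using excarr[OF a(1) hy(2)] excarr[OF a(1) ehy] excarr[of "ccomp C f h" y] fh h a(3) by auto
      ultimately have "leq P c (ex f z) (ex (ccomp C f h) y)" using trans[OF c] by blast
      thus "w \<in> I" using KD(2)[OF I hS] z `ex f z \<in> carr P c` by simp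
    qed
    have "ex f x \<in> I" using KD(3)[OF I efx F1 J2 F2] .
    thus ?thesis using a by simp
  qed
  show ?thesis unfolding geom_compl_def
    apply (rule CollectI, intro conjI)
      apply blast
    using A apply blast
    using B by blast
qed

end

theorem proposition5p5:
  fixes C :: "('o,'m) cat" and P :: "('o,'m,'x) doctrine"
    and ex :: "'m \<Rightarrow> 'x \<Rightarrow> 'x" and J :: "'o \<Rightarrow> 'x \<Rightarrow> 'x set \<Rightarrow> bool"
  assumes "existential_doctrinal_site C P ex J"
  shows "\<exists>\<phi> :: 'o \<Rightarrow> ('m \<times> 'x) set \<Rightarrow> 'x set.
     (\<forall>c\<in>obj C. bij_betw (\<phi> c) (geom_compl C P ex J c) (ideal_compl P J c) \<and>
        (\<forall>S\<in>geom_compl C P ex J c. \<forall>T\<in>geom_compl C P ex J c. S \<subseteq> T \<longleftrightarrow> \<phi> c S \<subseteq> \<phi> c T)) \<and>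
     (\<forall>f\<in>arr C. \<forall>S\<in>geom_compl C P ex J (ccod C f).
        \<phi> (cdom C f) (geom_compl_map C P f S) = ideal_compl_map C P ex f (\<phi> (ccod C f) S))"
proof -
  note E = assms
  define \<phi> where "\<phi> = (\<lambda>c S. {x\<in>carr P c. (cid C c, x) \<in> S})"
  have ord: "S \<subseteq> T \<longleftrightarrow> \<phi> c S \<subseteq> \<phi> c T"
    if c: "c \<in> obj C" and S: "S\<in>geom_compl C P ex J c" and T: "T\<in>geom_compl C P ex J c" for c S T
  proof
    assume "S \<subseteq> T" thus "\<phi> c S \<subseteq> \<phi> c T" unfolding \<phi>_def by auto
  next
    assume st: "\<phi> c S \<subseteq> \<phi> c T"
    show "S \<subseteq> T"
    proof
      fix p assume p: "p \<in> S"
      obtain f x where px: "p = (f,x)" by fastforce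
      have f: "f \<in> arr C" "ccod C f = c" "x \<in> carr P (cdom C f)" using gcD(1)[OF E S] p px by auto
      have "(cid C c, ex f x) \<in> S" using Siff[OF E S f] p px by simp
      moreover have "ex f x \<in> carr P c" using excarr[OF E f(1) f(3)] f(2) by simp
      ultimately have "(cid C c, ex f x) \<in> T" using st unfolding \<phi>_def by auto
      thus "p \<in> T" using Siff[OF E T f] px by simp
    qed
  qed
  have bij: "bij_betw (\<phi> c) (geom_compl C P ex J c) (ideal_compl P J c)" if c: "c \<in> obj C" for c
  proof (rule bij_betw_imageI)
    show "inj_on (\<phi> c) (geom_compl C P ex J c)"
      by (rule inj_onI) (metis ord[OF c] subset_antisym order_refl)
    show "\<phi> c ` geom_compl C P ex J c = ideal_compl P J c"
    proof
      show "\<phi> c ` geom_compl C P ex J c \<subseteq> ideal_compl P J c"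
        using phi_ideal[OF E _ c] unfolding \<phi>_def by auto
    next
      show "ideal_compl P J c \<subseteq> \<phi> c ` geom_compl C P ex J c"
      proof
        fix I assume I: "I \<in> ideal_compl P J c"
        let ?S = "{(f,x). f\<in>arr C \<and> ccod C f = c \<and> x \<in> carr P (cdom C f) \<and> ex f x \<in> I}"
        note ci = cid[OF E c]
        have "\<phi> c ?S = I"
        proof
          show "\<phi> c ?S \<subseteq> I" unfolding \<phi>_def using ci KD(2)[OF E I] exid2[OF E c] excarr[OF E]
            by (auto; metis)
          show "I \<subseteq> \<phi> c ?S"
          proof
            fix x assume x: "x \<in> I"
            have xc: "x \<in> carr P c" using KD(1)[OF E I] x by blast
            have e: "ex (cid C c) x \<in> carr P c" using excarr[OF E, of "cid C c" x] ci xc by simp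
            have "ex (cid C c) x \<in> I" using KD(2)[OF E I x e exid1[OF E c xc]] .
            thus "x \<in> \<phi> c ?S" unfolding \<phi>_def using ci xc by simp
          qed
        qed
        hence "I = \<phi> c ?S" by simp
        thus "I \<in> \<phi> c ` geom_compl C P ex J c" by (rule rev_image_eqI[OF psi_gc[OF E I c]])
      qed
    qed
  qed
  have nat: "\<phi> (cdom C f) (geom_compl_map C P f S) = ideal_compl_map C P ex f (\<phi> (ccod C f) S)"
    if f: "f\<in>arr C" and S: "S\<in>geom_compl C P ex J (ccod C f)" for f S
  proof -
    have d: "cdom C f \<in> obj C" using domcod[OF E f] by blast
    note ci = cid[OF E d]
    have "y \<in> \<phi> (cdom C f) (geom_compl_map C P f S) \<longleftrightarrow> y \<in> ideal_compl_map C P ex f (\<phi> (ccod C f) S)" for y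
    proof -
      have "y \<in> \<phi> (cdom C f) (geom_compl_map C P f S) \<longleftrightarrow> y \<in> carr P (cdom C f) \<and> (f, y) \<in> S"
        unfolding \<phi>_def geom_compl_map_def using ci idr[OF E f] by auto
      also have "\<dots> \<longleftrightarrow> y \<in> carr P (cdom C f) \<and> (cid C (ccod C f), ex f y) \<in> S"
        using Siff[OF E S f] by blast
      also have "\<dots> \<longleftrightarrow> y \<in> ideal_compl_map C P ex f (\<phi> (ccod C f) S)"
        unfolding \<phi>_def ideal_compl_map_def using excarr[OF E f] by auto
      finally show ?thesis .
    qed
    thus ?thesis by blast
  qed
  show ?thesis using bij ord nat by blast
qed

end
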